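(* Let $(X,p)$ be a complete partial metric space, let $x_o,y_o\in X$, and let $f,g:X\to X$ be functions such that $\{f^i(x_o)\}_{i\in\mathbb{N}}$ and $\{g^i(y_o)\}_{i\in\mathbb{N}}$ form a Cauchy pair. If $f$ and $g$ are non-expansive, $f$ is weakly orbitally continuous at $x_o$ and $g$ is weakly orbitally continuous at $y_o$, then $f$ and $g$ have a common fixed point.
   Context: A partial metric on $X$ is $p:X\times X\to\mathbb{R}$ with, for all $x,y,z$: $p(x,x)\le p(x,y)$; $p(x,y)=p(y,x)$; $p(x,x)=p(x,y)=p(y,y)$ iff $x=y$; $p(x,y)\le p(x,z)+p(z,y)-p(z,z)$. A point $a$ is a limit of $\{x_i\}$ iff for every $\epsilon>0$ there is $N$ with $p(a,x_i)-p(a,a)<\epsilon$ for all $i>N$ (convergence in the topology generated by the balls $\{y\mid p(x,y)-p(x,x)<\epsilon\}$). $\{x_i\}$ is Cauchy with central distance $r$ if for every $\epsilon>0$ there is $N$ with $|p(x_i,x_j)-r|<\epsilon$ for all $i\ge j>N$; a special limit is a limit $a$ with $p(a,a)=r$; $(X,p)$ is complete if every Cauchy sequence has a special limit. Sequences $\{x_i\},\{y_i\}$ form a Cauchy pair if there is $r\in\mathbb{R}$ such that for every $\epsilon>0$ there is $N$ with $r-\epsilon<\min\{p(x_i,x_i),p(y_j,y_j)\}\le p(x_i,y_j)<r+\epsilon$ for all $i,j>N$. $f^0(x)=x$, $f^{i+1}(x)=f(f^i(x))$. $f$ is non-expansive if $p(f(x),f(y))\le p(x,y)$ for all $x,y$;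 $f$ is weakly orbitally continuous at $x_o$ if whenever $a$ is a special limit of $\{f^i(x_o)\}$, $f(a)$ is a limit of $\{f^i(x_o)\}$. *)

theory Defs
  imports Main "HOL.Real"
begin

definition partial_metric :: "('a \<Rightarrow> 'a \<Rightarrow> real) \<Rightarrow> bool" where
  "partial_metric p \<longleftrightarrow>
     (\<forall>x y z.
        p x x \<le> p x y \<and>
        p x y = p y x \<and>
        ((p x x = p x y \<and> p x y = p y y) \<longleftrightarrow> x = y) \<and>
        p x y \<le> p x z + p z y - p z z)"

definition pm_limit :: "('a \<Rightarrow> 'a \<Rightarrow> real) \<Rightarrow> (nat \<Rightarrow> 'a) \<Rightarrow> 'a \<Rightarrow> bool" where
  "pm_limit p x a \<longleftrightarrow> (\<forall>\<epsilon>>0. \<exists>N. \<forall>i>N. p a (x i) - p a a < \<epsilon>)"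

definition pm_cauchy :: "('a \<Rightarrow> 'a \<Rightarrow> real) \<Rightarrow> (nat \<Rightarrow> 'a) \<Rightarrow> real \<Rightarrow> bool" where
  "pm_cauchy p x r \<longleftrightarrow> (\<forall>\<epsilon>>0. \<exists>N. \<forall>i j. i \<ge> j \<and> j > N \<longrightarrow> \<bar>p (x i) (x j) - r\<bar> < \<epsilon>)"

definition pm_special_limit :: "('a \<Rightarrow> 'a \<Rightarrow> real) \<Rightarrow> (nat \<Rightarrow> 'a) \<Rightarrow> real \<Rightarrow> 'a \<Rightarrow> bool" where
  "pm_special_limit p x r a \<longleftrightarrow> pm_limit p x a \<and> p a a = r"

definition pm_complete :: "('a \<Rightarrow> 'a \<Rightarrow> real) \<Rightarrow> bool" where
  "pm_complete p \<longleftrightarrow> (\<forall>x r. pm_cauchy p x r \<longrightarrow> (\<exists>a. pm_special_limit p x r a))"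

definition pm_cauchy_pair :: "('a \<Rightarrow> 'a \<Rightarrow> real) \<Rightarrow> (nat \<Rightarrow> 'a) \<Rightarrow> (nat \<Rightarrow> 'a) \<Rightarrow> bool" where
  "pm_cauchy_pair p x y \<longleftrightarrow> (\<exists>r. \<forall>\<epsilon>>0. \<exists>N. \<forall>i j. i > N \<and> j > N \<longrightarrow>
      r - \<epsilon> < min (p (x i) (x i)) (p (y j) (y j)) \<and>
      min (p (x i) (x i)) (p (y j) (y j)) \<le> p (x i) (y j) \<and>
      p (x i) (y j) < r + \<epsilon>)"

definition non_expansive :: "('a \<Rightarrow> 'a \<Rightarrow> real) \<Rightarrow> ('a \<Rightarrow> 'a) \<Rightarrow> bool" where
  "non_expansive p f \<longleftrightarrow> (\<forall>x y. p (f x) (f y) \<le> p x y)"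

text \<open>A special limit of a sequence is a limit a with p a a equal to the
  central distance of the sequence; for a non-Cauchy sequence the notion is
  read as: limit a such that the sequence is Cauchy with central distance p a a.\<close>
definition weakly_orbitally_continuous :: "('a \<Rightarrow> 'a \<Rightarrow> real) \<Rightarrow> ('a \<Rightarrow> 'a) \<Rightarrow> 'a \<Rightarrow> bool" where
  "weakly_orbitally_continuous p f x0 \<longleftrightarrow>
     (\<forall>a. (pm_cauchy p (\<lambda>i. (f ^^ i) x0) (p a a) \<and> pm_special_limit p (\<lambda>i. (f ^^ i) x0) (p a a) a)
          \<longrightarrow> pm_limit p (\<lambda>i. (f ^^ i) x0) (f a))"

end

theory Submission
  imports Defs
begin

lemma pm_sym: "partial_metric p \<Longrightarrow> p x y = p y x"
  unfolding partial_metric_def by blast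
lemma pm_le: "partial_metric p \<Longrightarrow> p x x \<le> p x y"
  unfolding partial_metric_def by blast
lemma pm_tri: "partial_metric p \<Longrightarrow> p x y \<le> p x z + p z y - p z z"
  unfolding partial_metric_def by blast
lemma pm_eq: "partial_metric p \<Longrightarrow> p x x = p x y \<Longrightarrow> p x y = p y y \<Longrightarrow> x = y"
  unfolding partial_metric_def by blast

lemma fixpt:
  assumes pm: "partial_metric p" and ne: "non_expansive p f"
    and xs: "\<And>i. x (Suc i) = f (x i)" and c: "pm_cauchy p x r"
    and la: "pm_limit p x a" and aa: "p a a = r" and lf: "pm_limit p x (f a)"
  shows "f a = a"
proof -
  have A: "p (f a) (f a) \<ge> r"
  proof (rule ccontr)
    assume "\<not> ?thesis"
    define e where "e = (r - p (f a) (f a)) / 2"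
    have e: "e > 0" using \<open>\<not> _\<close> unfolding e_def by simp
    from lf e obtain N1 where N1: "\<forall>i>N1. p (f a) (x i) - p (f a) (f a) < e"
      unfolding pm_limit_def by blast
    from c e obtain N2 where N2: "\<forall>i j. i \<ge> j \<and> j > N2 \<longrightarrow> \<bar>p (x i) (x j) - r\<bar> < e"
      unfolding pm_cauchy_def by blast
    define i where "i = Suc (N1 + N2)"
    have 1: "p (f a) (x i) - p (f a) (f a) < e" using N1 i_def by simp
    have 2: "\<bar>p (x i) (x i) - r\<bar> < e" using N2 i_def by simp
    have 3: "p (x i) (x i) \<le> p (f a) (x i)" using pm_le[OF pm] pm_sym[OF pm] by metis
    have h2b: "r - e < p (x i) (x i)" using 2 by (simp add: abs_less_iff)
    have "2*e = r - p (f a) (f a)" unfolding e_def by simp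
    then show False using 1 h2b 3 by linarith
  qed
  have B: "p a (f a) \<le> r"
  proof (rule ccontr)
    assume "\<not> ?thesis"
    define e where "e = (p a (f a) - r) / 3"
    have e: "e > 0" using \<open>\<not> _\<close> unfolding e_def by simp
    from la e obtain N1 where N1: "\<forall>i>N1. p a (x i) - p a a < e"
      unfolding pm_limit_def by blast
    from c e obtain N2 where N2: "\<forall>i j. i \<ge> j \<and> j > N2 \<longrightarrow> \<bar>p (x i) (x j) - r\<bar> < e"
      unfolding pm_cauchy_def by blast
    define i where "i = Suc (N1 + N2)"
    have 1: "p a (x i) - r < e" using N1 i_def aa by simp
    have 2: "p a (x (Suc i)) - r < e" using N1 i_def aa by simp
    have 3: "\<bar>p (x (Suc i)) (x (Suc i)) - r\<bar> < e" using N2 i_def by simp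
    have 4: "p (x (Suc i)) (f a) \<le> p a (x i)"
      using ne xs[of i] pm_sym[OF pm] unfolding non_expansive_def by metis
    have 5: "p a (f a) \<le> p a (x (Suc i)) + p (x (Suc i)) (f a) - p (x (Suc i)) (x (Suc i))"
      by (rule pm_tri[OF pm])
    have h3b: "r - e < p (x (Suc i)) (x (Suc i))" using 3 by (simp add: abs_less_iff)
    have "3*e = p a (f a) - r" unfolding e_def by simp
    then show False using 1 2 h3b 4 5 by linarith
  qed
  have C: "p (f a) (f a) \<le> p a (f a)" using pm_le[OF pm] pm_sym[OF pm] by metis
  have D: "p a a \<le> p a (f a)" by (rule pm_le[OF pm])
  have "p a a = p a (f a)" "p a (f a) = p (f a) (f a)" using A B C D aa by linarith+
  then show ?thesis using pm_eq[OF pm] by metis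
qed

theorem theorem7p9:
  fixes p :: "'a \<Rightarrow> 'a \<Rightarrow> real" and f g :: "'a \<Rightarrow> 'a" and x0 y0 :: 'a
  assumes "partial_metric p" and "pm_complete p"
    and "pm_cauchy_pair p (\<lambda>i. (f ^^ i) x0) (\<lambda>i. (g ^^ i) y0)"
    and "non_expansive p f" and "non_expansive p g"
    and "weakly_orbitally_continuous p f x0"
    and "weakly_orbitally_continuous p g y0"
  shows "\<exists>z. f z = z \<and> g z = z"
proof -
  note pm = assms(1)
  define x where "x = (\<lambda>i. (f ^^ i) x0)"
  define y where "y = (\<lambda>i. (g ^^ i) y0)"
  have xs: "\<And>i. x (Suc i) = f (x i)" unfolding x_def by simp
  have ys: "\<And>i. y (Suc i) = g (y i)" unfolding y_def by simp
  obtain r where R: "\<And>e. e > 0 \<Longrightarrow> \<exists>N. \<forall>i j. i > N \<and> j > N \<longrightarrow>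
      r - e < min (p (x i) (x i)) (p (y j) (y j)) \<and>
      min (p (x i) (x i)) (p (y j) (y j)) \<le> p (x i) (y j) \<and>
      p (x i) (y j) < r + e"
    using assms(3) unfolding pm_cauchy_pair_def x_def y_def by blast
  have cx: "pm_cauchy p x r"
    unfolding pm_cauchy_def
  proof (intro allI impI)
    fix e :: real assume e: "e > 0"
    then obtain N where N: "\<forall>i j. i > N \<and> j > N \<longrightarrow>
      r - e/3 < min (p (x i) (x i)) (p (y j) (y j)) \<and>
      min (p (x i) (x i)) (p (y j) (y j)) \<le> p (x i) (y j) \<and>
      p (x i) (y j) < r + e/3" using R[of "e/3"] by auto
    show "\<exists>N. \<forall>i j. j \<le> i \<and> N < j \<longrightarrow> \<bar>p (x i) (x j) - r\<bar> < e"
    proof (intro exI allI impI)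
      fix i j assume ij: "j \<le> i \<and> N < j"
      define k where "k = Suc N"
      have 1: "r - e/3 < min (p (x i) (x i)) (p (y k) (y k)) \<and> p (x i) (y k) < r + e/3"
        using N ij k_def by auto
      have 2: "r - e/3 < min (p (x j) (x j)) (p (y k) (y k)) \<and> p (x j) (y k) < r + e/3"
        using N ij k_def by auto
      have 3: "p (x i) (x j) \<le> p (x i) (y k) + p (y k) (x j) - p (y k) (y k)"
        by (rule pm_tri[OF pm])
      have 4: "p (y k) (x j) = p (x j) (y k)" by (rule pm_sym[OF pm])
      have 5: "p (x j) (x j) \<le> p (x i) (x j)" using pm_le[OF pm] pm_sym[OF pm] by metis
      show "\<bar>p (x i) (x j) - r\<bar> < e" using 1 2 3 4 5 e by (simp add: abs_less_iff min_def split: if_splits)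
    qed
  qed
  have cy: "pm_cauchy p y r"
    unfolding pm_cauchy_def
  proof (intro allI impI)
    fix e :: real assume e: "e > 0"
    then obtain N where N: "\<forall>i j. i > N \<and> j > N \<longrightarrow>
      r - e/3 < min (p (x i) (x i)) (p (y j) (y j)) \<and>
      min (p (x i) (x i)) (p (y j) (y j)) \<le> p (x i) (y j) \<and>
      p (x i) (y j) < r + e/3" using R[of "e/3"] by auto
    show "\<exists>N. \<forall>i j. j \<le> i \<and> N < j \<longrightarrow> \<bar>p (y i) (y j) - r\<bar> < e"
    proof (intro exI allI impI)
      fix i j assume ij: "j \<le> i \<and> N < j"
      define k where "k = Suc N"
      have 1: "r - e/3 < min (p (x k) (x k)) (p (y i) (y i)) \<and> p (x k) (y i) < r + e/3"
        using N ij k_def by auto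
      have 2: "r - e/3 < min (p (x k) (x k)) (p (y j) (y j)) \<and> p (x k) (y j) < r + e/3"
        using N ij k_def by auto
      have 3: "p (y i) (y j) \<le> p (y i) (x k) + p (x k) (y j) - p (x k) (x k)"
        by (rule pm_tri[OF pm])
      have 4: "p (y i) (x k) = p (x k) (y i)" by (rule pm_sym[OF pm])
      have 5: "p (y j) (y j) \<le> p (y i) (y j)" using pm_le[OF pm] pm_sym[OF pm] by metis
      show "\<bar>p (y i) (y j) - r\<bar> < e" using 1 2 3 4 5 e by (simp add: abs_less_iff min_def split: if_splits)
    qed
  qed
  obtain a where a: "pm_limit p x a" "p a a = r"
    using assms(2) cx unfolding pm_complete_def pm_special_limit_def by blast
  have ly: "pm_limit p y a"
    unfolding pm_limit_def
  proof (intro allI impI)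
    fix e :: real assume e: "e > 0"
    then obtain N where N: "\<forall>i j. i > N \<and> j > N \<longrightarrow>
      r - e/3 < min (p (x i) (x i)) (p (y j) (y j)) \<and>
      min (p (x i) (x i)) (p (y j) (y j)) \<le> p (x i) (y j) \<and>
      p (x i) (y j) < r + e/3" using R[of "e/3"] by auto
    from a(1) e obtain N2 where N2: "\<forall>i>N2. p a (x i) - p a a < e/3"
      unfolding pm_limit_def by (meson divide_pos_pos zero_less_numeral)
    show "\<exists>N. \<forall>j>N. p a (y j) - p a a < e"
    proof (intro exI allI impI)
      fix j assume j: "j > N"
      define i where "i = Suc (N + N2)"
      have 1: "r - e/3 < min (p (x i) (x i)) (p (y j) (y j)) \<and> p (x i) (y j) < r + e/3"
        using N j i_def by auto
      have 2: "p a (x i) - r < e/3" using N2 i_def a(2) by simp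
      have 3: "p a (y j) \<le> p a (x i) + p (x i) (y j) - p (x i) (x i)" by (rule pm_tri[OF pm])
      show "p a (y j) - p a a < e" using 1 2 3 a(2) by (simp add: min_def split: if_splits)
    qed
  qed
  have fx: "pm_limit p x (f a)"
    using assms(6) cx a unfolding weakly_orbitally_continuous_def pm_special_limit_def x_def by auto
  have gy: "pm_limit p y (g a)"
    using assms(7) cy ly a(2) unfolding weakly_orbitally_continuous_def pm_special_limit_def y_def by auto
  have "f a = a" by (rule fixpt[OF pm assms(4) xs cx a fx])
  moreover have "g a = a" by (rule fixpt[OF pm assms(5) ys cy ly a(2) gy])
  ultimately show ?thesis by blast
qed

end
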